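(* Let $R$ be a finitely generated commutative ring which is reduced, equipped with a ring homomorphism $\alpha:R\to\mathbb{Z}$ and a regular element $r\in R$. Then there exists a finite subset $S\subset R$ such that $\mathcal{K}_r(x)=\mathcal{K}_r^S(x)$ for all $x\in R$.
   Context: An element $r\in R$ is regular if $\alpha(r)\neq 0$ and $x\cdot r=\alpha(x)r$ for all $x\in R$. The Knutson Index $\mathcal{K}_r(x)$ of $x\in R$ is the non-negative integer $m$ such that $Rx\cap\mathbb{Z}r=m\mathbb{Z}r$. For a subset $S\subseteq R$ and $x\in R$, let $S(x)=\{s\in S: s\cdot x\in\mathbb{Z}r\}$ and $\mathrm{Ind}(x)=\{m\in\mathbb{Z}: s\cdot x=m r \text{ for some } s\in S(x)\}$. The Knutson $S$-subindex is $\mathcal{K}_r^S(x)=\gcd(\mathrm{Ind}(x))$, and $\mathcal{K}_r^S(x)=\infty$ if $S(x)=\emptyset$. *)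

theory Defs
  imports Main "HOL-Library.Extended_Nat"
begin

inductive_set ring_generated :: "'a::comm_ring_1 set \<Rightarrow> 'a set" for G where
  gen: "g \<in> G \<Longrightarrow> g \<in> ring_generated G"
| one: "1 \<in> ring_generated G"
| add: "x \<in> ring_generated G \<Longrightarrow> y \<in> ring_generated G \<Longrightarrow> x + y \<in> ring_generated G"
| neg: "x \<in> ring_generated G \<Longrightarrow> - x \<in> ring_generated G"
| mult: "x \<in> ring_generated G \<Longrightarrow> y \<in> ring_generated G \<Longrightarrow> x * y \<in> ring_generated G"

definition finitely_generated_ring :: "'a::comm_ring_1 itself \<Rightarrow> bool" where
  "finitely_generated_ring _ \<longleftrightarrow> (\<exists>G::'a set. finite G \<and> ring_generated G = UNIV)"

definition reduced_ring :: "'a::comm_ring_1 itself \<Rightarrow> bool" where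
  "reduced_ring _ \<longleftrightarrow> (\<forall>(x::'a) (n::nat). x ^ n = 0 \<longrightarrow> x = 0)"

definition is_ring_hom_to_int :: "('a::comm_ring_1 \<Rightarrow> int) \<Rightarrow> bool" where
  "is_ring_hom_to_int \<alpha> \<longleftrightarrow> \<alpha> 1 = 1 \<and> (\<forall>x y. \<alpha> (x + y) = \<alpha> x + \<alpha> y) \<and> (\<forall>x y. \<alpha> (x * y) = \<alpha> x * \<alpha> y)"

definition regular_elem :: "('a::comm_ring_1 \<Rightarrow> int) \<Rightarrow> 'a \<Rightarrow> bool" where
  "regular_elem \<alpha> r \<longleftrightarrow> \<alpha> r \<noteq> 0 \<and> (\<forall>x. x * r = of_int (\<alpha> x) * r)"

definition int_multiples :: "'a::comm_ring_1 \<Rightarrow> 'a set" where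
  "int_multiples r = {of_int n * r | n. True}"

definition knutson_index :: "'a::comm_ring_1 \<Rightarrow> 'a \<Rightarrow> nat" where
  "knutson_index r x = (THE m::nat. {a * x | a. True} \<inter> int_multiples r = int_multiples (of_nat m * r))"

definition S_part :: "'a::comm_ring_1 set \<Rightarrow> 'a \<Rightarrow> 'a \<Rightarrow> 'a set" where
  "S_part S r x = {s \<in> S. s * x \<in> int_multiples r}"

definition Ind :: "'a::comm_ring_1 set \<Rightarrow> 'a \<Rightarrow> 'a \<Rightarrow> int set" where
  "Ind S r x = {m::int. \<exists>s \<in> S_part S r x. s * x = of_int m * r}"

definition knutson_subindex :: "'a::comm_ring_1 set \<Rightarrow> 'a \<Rightarrow> 'a \<Rightarrow> enat" where
  "knutson_subindex S r x =
     (if S_part S r x = {} then \<infinity> else enat (nat (Gcd (Ind S r x))))"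

end

theory Submission
  imports Defs
begin

definition ideal_in :: "'a::comm_ring_1 set \<Rightarrow> 'a set \<Rightarrow> bool" where
  "ideal_in A I \<longleftrightarrow> I \<subseteq> A \<and> 0 \<in> I \<and> (\<forall>x\<in>I. \<forall>y\<in>I. x + y \<in> I) \<and> (\<forall>a\<in>A. \<forall>x\<in>I. a * x \<in> I)"

definition noeth :: "'a::comm_ring_1 set \<Rightarrow> bool" where
  "noeth A \<longleftrightarrow> (\<forall>F. F \<noteq> {} \<and> (\<forall>I\<in>F. ideal_in A I) \<longrightarrow> (\<exists>M\<in>F. \<forall>I\<in>F. M \<subseteq> I \<longrightarrow> I = M))"

definition subring :: "'a::comm_ring_1 set \<Rightarrow> bool" where
  "subring A \<longleftrightarrow> 1 \<in> A \<and> (\<forall>x\<in>A. \<forall>y\<in>A. x + y \<in> A \<and> x * y \<in> A) \<and> (\<forall>x\<in>A. -x \<in> A)"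

fun pe :: "'a::comm_ring_1 \<Rightarrow> 'a list \<Rightarrow> 'a" where
  "pe g [] = 0"
| "pe g (a # as) = a + g * pe g as"

definition adjoin :: "'a::comm_ring_1 set \<Rightarrow> 'a \<Rightarrow> 'a set" where
  "adjoin A g = {pe g as | as. set as \<subseteq> A}"

lemma pe_append: "pe g (as @ [a]) = pe g as + a * g ^ length as"
  by (induction as) (auto simp: algebra_simps)

lemma pe_replicate0: "pe g (replicate n 0) = 0"
  by (induction n) auto

lemma pe_pad: "pe g (as @ replicate n 0) = pe g as"
  by (induction as) (auto simp: pe_replicate0)

lemma pe_add: "length as = length bs \<Longrightarrow> pe g (map2 (+) as bs) = pe g as + pe g bs"
  by (induction as bs rule: list_induct2) (auto simp: algebra_simps)

lemma pe_diff: "length as = length bs \<Longrightarrow> pe g (map2 (-) as bs) = pe g as - pe g bs"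
proof (induction as bs rule: list_induct2)
  case (Cons x xs y ys)
  then have "pe g (map2 (-) (x#xs) (y#ys)) = (x - y) + g * (pe g xs - pe g ys)" by simp
  also have "\<dots> = pe g (x#xs) - pe g (y#ys)" by (simp add: algebra_simps)
  finally show ?case .
qed simp

lemma pe_scale: "pe g (map ((*) c) as) = c * pe g as"
  by (induction as) (auto simp: algebra_simps)

lemma set_map2_sub: "set as \<subseteq> A \<Longrightarrow> set bs \<subseteq> A \<Longrightarrow> (\<forall>x\<in>A. \<forall>y\<in>A. f x y \<in> A) \<Longrightarrow> set (map2 f as bs) \<subseteq> A"
proof
  fix z assume a: "set as \<subseteq> A" "set bs \<subseteq> A" "\<forall>x\<in>A. \<forall>y\<in>A. f x y \<in> A" and z: "z \<in> set (map2 f as bs)"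
  from z obtain x y where xy: "(x, y) \<in> set (zip as bs)" "z = f x y" by auto
  have "x \<in> A" using set_zip_leftD[OF xy(1)] a(1) by blast
  moreover have "y \<in> A" using set_zip_rightD[OF xy(1)] a(2) by blast
  ultimately show "z \<in> A" using a(3) xy(2) by blast
qed

lemma subring_0: "subring A \<Longrightarrow> 0 \<in> A"
proof -
  assume A: "subring A"
  then have "1 \<in> A" "-1 \<in> A" unfolding subring_def by auto
  then have "1 + -1 \<in> A" using A unfolding subring_def by blast
  then show ?thesis by simp
qed

lemma subring_diff: "subring A \<Longrightarrow> x \<in> A \<Longrightarrow> y \<in> A \<Longrightarrow> x - y \<in> A"
proof -
  assume A: "subring A" "x \<in> A" "y \<in> A"
  then have "-y \<in> A" unfolding subring_def by auto
  then have "x + -y \<in> A" using A unfolding subring_def by blast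
  then show ?thesis by simp
qed

lemma adjoin_add:
  assumes A: "subring A" and x: "x \<in> adjoin A g" and y: "y \<in> adjoin A g"
  shows "x + y \<in> adjoin A g"
proof -
  obtain as bs where as: "set as \<subseteq> A" "x = pe g as" and bs: "set bs \<subseteq> A" "y = pe g bs"
    using x y unfolding adjoin_def by auto
  define as' where "as' = as @ replicate (length bs - length as) 0"
  define bs' where "bs' = bs @ replicate (length as - length bs) 0"
  have l: "length as' = length bs'" unfolding as'_def bs'_def by auto
  have s: "set as' \<subseteq> A" "set bs' \<subseteq> A" using as bs subring_0[OF A] unfolding as'_def bs'_def by auto
  have "x + y = pe g (map2 (+) as' bs')" using pe_add[OF l] as bs by (simp add: as'_def bs'_def pe_pad)
  moreover have "set (map2 (+) as' bs') \<subseteq> A" using s set_map2_sub A unfolding subring_def by blast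
  ultimately show ?thesis unfolding adjoin_def by blast
qed

lemma adjoin_scale:
  assumes A: "subring A" and c: "c \<in> A" and x: "x \<in> adjoin A g"
  shows "c * x \<in> adjoin A g"
proof -
  obtain as where as: "set as \<subseteq> A" "x = pe g as" using x unfolding adjoin_def by auto
  have "c * x = pe g (map ((*) c) as)" using as by (simp add: pe_scale)
  moreover have "set (map ((*) c) as) \<subseteq> A" using as c A unfolding subring_def by auto
  ultimately show ?thesis unfolding adjoin_def by blast
qed

lemma adjoin_shift:
  assumes A: "subring A" and x: "x \<in> adjoin A g"
  shows "g * x \<in> adjoin A g"
proof -
  obtain as where as: "set as \<subseteq> A" "x = pe g as" using x unfolding adjoin_def by auto
  have "g * x = pe g (0 # as)" using as by simp
  moreover have "set (0 # as) \<subseteq> A" using as subring_0[OF A] by auto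
  ultimately show ?thesis unfolding adjoin_def by blast
qed

lemma adjoin_base: "a \<in> A \<Longrightarrow> a \<in> adjoin A g"
  unfolding adjoin_def by (rule CollectI, rule exI[of _ "[a]"]) auto

lemma adjoin_gen: "subring A \<Longrightarrow> g \<in> adjoin A g"
  unfolding adjoin_def
  by (rule CollectI, rule exI[of _ "[0,1]"]) (auto simp: subring_0 subring_def)

lemma adjoin_mult:
  assumes A: "subring A" and y: "y \<in> adjoin A g"
  shows "set as \<subseteq> A \<Longrightarrow> pe g as * y \<in> adjoin A g"
proof (induction as)
  case Nil
  then show ?case using adjoin_base subring_0[OF A] by simp
next
  case (Cons a as)
  have "pe g (a # as) * y = a * y + g * (pe g as * y)" by (simp add: algebra_simps)
  then show ?case using Cons adjoin_add[OF A] adjoin_scale[OF A] adjoin_shift[OF A] y by auto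
qed

lemma adjoin_subring: assumes A: "subring A" shows "subring (adjoin A g)"
  unfolding subring_def
proof (intro conjI ballI)
  show "1 \<in> adjoin A g" using adjoin_base A unfolding subring_def by auto
next
  fix x y assume x: "x \<in> adjoin A g" and y: "y \<in> adjoin A g"
  show "x + y \<in> adjoin A g" using adjoin_add[OF A x y] .
  obtain as where as: "set as \<subseteq> A" "x = pe g as" using x unfolding adjoin_def by auto
  show "x * y \<in> adjoin A g" using adjoin_mult[OF A y as(1)] as(2) by simp
next
  fix x assume x: "x \<in> adjoin A g"
  have "-1 \<in> A" using A unfolding subring_def by auto
  then show "-x \<in> adjoin A g" using adjoin_scale[OF A _ x] by fastforce
qed

lemma adjoin_least:
  assumes B: "subring B" and AB: "A \<subseteq> B" and g: "g \<in> B"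
  shows "adjoin A g \<subseteq> B"
proof
  fix x assume "x \<in> adjoin A g"
  then obtain as where as: "set as \<subseteq> A" "x = pe g as" unfolding adjoin_def by auto
  have "set as \<subseteq> A \<Longrightarrow> pe g as \<in> B"
    by (induction as) (use B AB g subring_0[OF B] in \<open>auto simp: subring_def\<close>)
  then show "x \<in> B" using as by simp
qed

lemma rg_subring: "subring (ring_generated G)"
  unfolding subring_def by (auto intro: ring_generated.intros)

lemma rg_least: "subring B \<Longrightarrow> G \<subseteq> B \<Longrightarrow> ring_generated G \<subseteq> B"
proof
  fix x assume B: "subring B" "G \<subseteq> B" and x: "x \<in> ring_generated G"
  from x show "x \<in> B" by (induction x rule: ring_generated.induct) (use B in \<open>auto simp: subring_def\<close>)
qed

lemma rg_insert: "ring_generated (insert g G) = adjoin (ring_generated G) g"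
proof
  show "ring_generated (insert g G) \<subseteq> adjoin (ring_generated G) g"
    apply (rule rg_least[OF adjoin_subring[OF rg_subring]])
    using adjoin_gen[OF rg_subring] adjoin_base ring_generated.gen by blast
  show "adjoin (ring_generated G) g \<subseteq> ring_generated (insert g G)"
    apply (rule adjoin_least[OF rg_subring])
     apply (rule rg_least[OF rg_subring]) by (auto intro: ring_generated.gen)
qed

lemma of_int_in_subring: "subring A \<Longrightarrow> of_int n \<in> A"
proof -
  assume A: "subring A"
  have nat: "of_nat k \<in> A" for k
    by (induction k) (use A subring_0[OF A] in \<open>auto simp: subring_def\<close>)
  have "of_int n = (of_nat (nat n) - of_nat (nat (- n)) :: 'a)" by (cases "n \<ge> 0") auto
  then show ?thesis using subring_diff[OF A nat nat] by simp
qed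

lemma rg_empty: "ring_generated {} = range (of_int :: int \<Rightarrow> 'a::comm_ring_1)"
proof
  have "subring (range (of_int :: int \<Rightarrow> 'a))"
    unfolding subring_def
  proof (intro conjI ballI)
    show "1 \<in> range (of_int :: int \<Rightarrow> 'a)" by (metis of_int_1 rangeI)
    fix x y :: 'a assume "x \<in> range of_int" "y \<in> range of_int"
    then obtain i j where "x = of_int i" "y = of_int j" by auto
    then show "x + y \<in> range of_int" "x * y \<in> range of_int"
      by (metis of_int_add rangeI, metis of_int_mult rangeI)
  next
    fix x :: 'a assume "x \<in> range of_int"
    then obtain i where "x = of_int i" by auto
    then show "- x \<in> range of_int" by (metis of_int_minus rangeI)
  qed
  then show "ring_generated {} \<subseteq> range (of_int :: int \<Rightarrow> 'a)" using rg_least by blast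
  show "range of_int \<subseteq> (ring_generated {} :: 'a set)" using of_int_in_subring[OF rg_subring] by blast
qed

lemma int_gen:
  fixes N :: "int set"
  assumes "0 \<in> N" "\<And>x y. x \<in> N \<Longrightarrow> y \<in> N \<Longrightarrow> x + y \<in> N" "\<And>z x. x \<in> N \<Longrightarrow> z * x \<in> N"
  shows "\<exists>g\<in>N. \<forall>n\<in>N. g dvd n"
proof (cases "N \<subseteq> {0}")
  case True then show ?thesis using assms(1) by auto
next
  case False
  then obtain x where x: "x \<in> N" "x \<noteq> 0" by auto
  have "\<exists>k::nat. k > 0 \<and> int k \<in> N"
  proof (cases "x > 0")
    case True then show ?thesis using x by (intro exI[of _ "nat x"]) auto
  next
    case False
    then have "-x > 0" using x by auto
    moreover have "-x \<in> N" using assms(3)[of x "-1"] x by simp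
    ultimately show ?thesis by (intro exI[of _ "nat (-x)"]) auto
  qed
  define k where "k = (LEAST k::nat. k > 0 \<and> int k \<in> N)"
  have k: "k > 0" "int k \<in> N" using LeastI_ex[OF \<open>\<exists>k::nat. k > 0 \<and> int k \<in> N\<close>] unfolding k_def by auto
  have kl: "\<And>j::nat. j > 0 \<Longrightarrow> int j \<in> N \<Longrightarrow> k \<le> j" unfolding k_def by (rule Least_le) auto
  show ?thesis
  proof (intro bexI[OF _ k(2)] ballI)
    fix n assume n: "n \<in> N"
    have e: "n mod int k = n + (- (n div int k)) * int k" 
    proof -
      have "n + (- (n div int k)) * int k = n - n div int k * int k" by simp
      also have "\<dots> = n mod int k" by (rule minus_div_mult_eq_mod)
      finally show ?thesis by simp
    qed
    have "n + (- (n div int k)) * int k \<in> N" by (rule assms(2)[OF n assms(3)[OF k(2)]])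
    then have m: "n mod int k \<in> N" by (metis e)
    have "n mod int k \<ge> 0" "n mod int k < int k" using k by auto
    have "n mod int k = 0"
    proof (rule ccontr)
      assume "n mod int k \<noteq> 0"
      then have pos: "nat (n mod int k) > 0" using \<open>n mod int k \<ge> 0\<close> by auto
      have "int (nat (n mod int k)) \<in> N" using m \<open>n mod int k \<ge> 0\<close> by simp
      then have "k \<le> nat (n mod int k)" using kl pos by blast
      then show False using \<open>n mod int k < int k\<close> \<open>0 \<le> n mod int k\<close> by (simp add: le_nat_iff)
    qed
    then show "int k dvd n" by auto
  qed
qed

lemma noeth_int: "noeth (range (of_int :: int \<Rightarrow> 'a::comm_ring_1))"
  unfolding noeth_def
proof (intro allI impI)
  fix F :: "'a set set"
  assume F: "F \<noteq> {} \<and> (\<forall>I\<in>F. ideal_in (range of_int) I)"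
  define N where "N I = {n::int. of_int n \<in> I}" for I :: "'a set"
  have Iid: "I = of_int ` N I" if "I \<in> F" for I
  proof
    show "I \<subseteq> of_int ` N I"
    proof
      fix x assume x: "x \<in> I"
      have id: "ideal_in (range of_int) I" using conjunct2[OF F] that by (rule bspec)
      have "I \<subseteq> range of_int" using id unfolding ideal_in_def by (rule conjunct1)
      then have "x \<in> range of_int" using x by (rule subsetD)
      then obtain n where n: "x = of_int n" by (rule rangeE)
      then have "n \<in> N I" using x unfolding N_def by simp
      then show "x \<in> of_int ` N I" using n by (rule rev_image_eqI)
    qed
    show "of_int ` N I \<subseteq> I" unfolding N_def by blast
  qed
  have Nc: "0 \<in> N I" "\<And>x y. x \<in> N I \<Longrightarrow> y \<in> N I \<Longrightarrow> x + y \<in> N I"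
    "\<And>z x. x \<in> N I \<Longrightarrow> z * x \<in> N I" if "I \<in> F" for I
  proof -
    have id: "ideal_in (range of_int) I" using conjunct2[OF F] that by (rule bspec)
    show "0 \<in> N I" using id unfolding ideal_in_def N_def by simp
    show "x + y \<in> N I" if "x \<in> N I" "y \<in> N I" for x y
    proof -
      have "of_int x + of_int y \<in> I" using id that unfolding ideal_in_def N_def by blast
      then show ?thesis unfolding N_def by simp
    qed
    show "z * x \<in> N I" if "x \<in> N I" for z x
    proof -
      have "of_int z * of_int x \<in> I" using id that unfolding ideal_in_def N_def by blast
      then show ?thesis unfolding N_def by simp
    qed
  qed
  define gen where "gen I = (SOME g. g \<in> N I \<and> (\<forall>n\<in>N I. g dvd n))" for I
  have gen: "gen I \<in> N I" "\<And>n. n \<in> N I \<Longrightarrow> gen I dvd n" if "I \<in> F" for I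
  proof -
    have ex: "\<exists>g. g \<in> N I \<and> (\<forall>n\<in>N I. g dvd n)" using int_gen[of "N I"] Nc[OF that] by blast
    show "gen I \<in> N I" "\<And>n. n \<in> N I \<Longrightarrow> gen I dvd n" using someI_ex[OF ex] unfolding gen_def by auto
  qed
  show "\<exists>M\<in>F. \<forall>I\<in>F. M \<subseteq> I \<longrightarrow> I = M"
  proof (cases "\<forall>I\<in>F. gen I = 0")
    case True
    have "I = {0}" if "I \<in> F" for I
    proof -
      have "N I \<subseteq> {0}" using gen[OF that] True that by auto
      then have "N I = {0}" using Nc(1)[OF that] by auto
      then show ?thesis by (metis Iid[OF that] image_empty image_insert of_int_0)
    qed
    then have all0: "\<And>I. I \<in> F \<Longrightarrow> I = {0}" .
    obtain M where "M \<in> F" using F by auto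
    then show ?thesis using all0 by (intro bexI[of _ M]) auto
  next
    case False
    then have ex: "\<exists>k. \<exists>I\<in>F. gen I \<noteq> 0 \<and> nat \<bar>gen I\<bar> = k" by auto
    define k where "k = (LEAST k. \<exists>I\<in>F. gen I \<noteq> 0 \<and> nat \<bar>gen I\<bar> = k)"
    obtain M where M: "M \<in> F" "gen M \<noteq> 0" "nat \<bar>gen M\<bar> = k"
      using LeastI_ex[OF ex] unfolding k_def by auto
    have kl: "k \<le> nat \<bar>gen I\<bar>" if "I \<in> F" "gen I \<noteq> 0" for I
      unfolding k_def by (rule Least_le) (use that in auto)
    show ?thesis
    proof (intro bexI[OF _ M(1)] ballI impI)
      fix I assume I: "I \<in> F" "M \<subseteq> I"
      have NMI: "N M \<subseteq> N I" using I unfolding N_def by auto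
      have d: "gen I dvd gen M" using gen(2)[OF I(1)] NMI gen(1)[OF M(1)] by auto
      then have nz: "gen I \<noteq> 0" using M(2) by auto
      have "\<bar>gen I\<bar> \<le> \<bar>gen M\<bar>" using d M(2) by (intro dvd_imp_le_int)
      moreover have "\<bar>gen M\<bar> \<le> \<bar>gen I\<bar>" using kl[OF I(1) nz] M(3) by auto
      ultimately have "\<bar>gen I\<bar> = \<bar>gen M\<bar>" by auto
      then have d2: "gen M dvd gen I" by (metis dvd_if_abs_eq)
      have "N I \<subseteq> N M"
      proof
        fix n assume "n \<in> N I"
        then have "gen M dvd n" using gen(2)[OF I(1)] d2 dvd_trans by (meson dvd_trans)
        then obtain e where "n = e * gen M" by (auto simp: dvd_def mult.commute)
        then show "n \<in> N M" using Nc(3)[OF M(1) gen(1)[OF M(1)]] by simp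
      qed
      then have "N I = N M" using NMI by auto
      then show "I = M" using Iid[OF I(1)] Iid[OF M(1)] by argo
    qed
  qed
qed

lemma noethD: "noeth A \<Longrightarrow> F \<noteq> {} \<Longrightarrow> (\<forall>I\<in>F. ideal_in A I) \<Longrightarrow> \<exists>M\<in>F. \<forall>I\<in>F. M \<subseteq> I \<longrightarrow> I = M"
  unfolding noeth_def by (drule spec[of _ F]) blast

context
  fixes A :: "'a::comm_ring_1 set" and g :: 'a
  assumes A: "subring A"
begin

definition LC :: "nat \<Rightarrow> 'a set \<Rightarrow> 'a set" where
  "LC n I = {a \<in> A. \<exists>as. set as \<subseteq> A \<and> length as = n \<and> a * g ^ n + pe g as \<in> I}"

lemma B_sub: "subring (adjoin A g)" by (rule adjoin_subring[OF A])

lemma ideal_sub: "ideal_in (adjoin A g) I \<Longrightarrow> x \<in> I \<Longrightarrow> y \<in> I \<Longrightarrow> x - y \<in> I"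
proof -
  assume I: "ideal_in (adjoin A g) I" "x \<in> I" "y \<in> I"
  have "-1 \<in> adjoin A g" using B_sub unfolding subring_def by blast
  then have "(-1) * y \<in> I" using I unfolding ideal_in_def by blast
  then have "x + (-1) * y \<in> I" using I unfolding ideal_in_def by blast
  then show ?thesis by simp
qed

lemma LC_ideal: assumes I: "ideal_in (adjoin A g) I" shows "ideal_in A (LC n I)"
  unfolding ideal_in_def
proof (intro conjI ballI)
  show "LC n I \<subseteq> A" unfolding LC_def by blast
  have "0 * g ^ n + pe g (replicate n 0) \<in> I" using I unfolding ideal_in_def by (simp add: pe_replicate0)
  moreover have "set (replicate n 0) \<subseteq> A" using subring_0[OF A] by auto
  ultimately show "0 \<in> LC n I" unfolding LC_def using subring_0[OF A] by (intro CollectI conjI exI[of _ "replicate n 0"]) auto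
next
  fix x y assume x: "x \<in> LC n I" and y: "y \<in> LC n I"
  obtain as where as: "x \<in> A" "set as \<subseteq> A" "length as = n" "x * g ^ n + pe g as \<in> I" using x unfolding LC_def by blast
  obtain bs where bs: "y \<in> A" "set bs \<subseteq> A" "length bs = n" "y * g ^ n + pe g bs \<in> I" using y unfolding LC_def by blast
  have "(x * g ^ n + pe g as) + (y * g ^ n + pe g bs) \<in> I" using as(4) bs(4) I unfolding ideal_in_def by blast
  moreover have "(x * g ^ n + pe g as) + (y * g ^ n + pe g bs) = (x + y) * g ^ n + pe g (map2 (+) as bs)"
    using pe_add[of as bs g] as(3) bs(3) by (simp add: algebra_simps)
  moreover have "set (map2 (+) as bs) \<subseteq> A" using set_map2_sub[OF as(2) bs(2)] A unfolding subring_def by blast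
  moreover have "length (map2 (+) as bs) = n" using as(3) bs(3) by simp
  moreover have "x + y \<in> A" using as(1) bs(1) A unfolding subring_def by blast
  ultimately show "x + y \<in> LC n I" unfolding LC_def by (intro CollectI conjI exI[of _ "map2 (+) as bs"]) auto
next
  fix c x assume c: "c \<in> A" and x: "x \<in> LC n I"
  obtain as where as: "x \<in> A" "set as \<subseteq> A" "length as = n" "x * g ^ n + pe g as \<in> I" using x unfolding LC_def by blast
  have "c \<in> adjoin A g" using c by (rule adjoin_base)
  then have "c * (x * g ^ n + pe g as) \<in> I" using as(4) I unfolding ideal_in_def by blast
  moreover have "c * (x * g ^ n + pe g as) = (c * x) * g ^ n + pe g (map ((*) c) as)"
    by (simp add: pe_scale algebra_simps)
  moreover have "set (map ((*) c) as) \<subseteq> A" using as(2) c A unfolding subring_def by auto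
  moreover have "length (map ((*) c) as) = n" using as(3) by simp
  moreover have "c * x \<in> A" using as(1) c A unfolding subring_def by blast
  ultimately show "c * x \<in> LC n I" unfolding LC_def by (intro CollectI conjI exI[of _ "map ((*) c) as"]) auto
qed

lemma LC_monoI: "I \<subseteq> J \<Longrightarrow> LC n I \<subseteq> LC n J"
  unfolding LC_def by blast

lemma LC_Suc: assumes I: "ideal_in (adjoin A g) I" shows "LC n I \<subseteq> LC (Suc n) I"
proof
  fix x assume x: "x \<in> LC n I"
  obtain as where as: "x \<in> A" "set as \<subseteq> A" "length as = n" "x * g ^ n + pe g as \<in> I" using x unfolding LC_def by blast
  have "g \<in> adjoin A g" by (rule adjoin_gen[OF A])
  then have "g * (x * g ^ n + pe g as) \<in> I" using as(4) I unfolding ideal_in_def by blast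
  moreover have "g * (x * g ^ n + pe g as) = x * g ^ Suc n + pe g (0 # as)" by (simp add: algebra_simps)
  moreover have "set (0 # as) \<subseteq> A" using as(2) subring_0[OF A] by auto
  moreover have "length (0 # as) = Suc n" using as(3) by simp
  ultimately show "x \<in> LC (Suc n) I" unfolding LC_def using as(1) by (intro CollectI conjI exI[of _ "0 # as"]) auto
qed

lemma LC_mono: assumes I: "ideal_in (adjoin A g) I" shows "n \<le> m \<Longrightarrow> LC n I \<subseteq> LC m I"
proof (induction m rule: dec_induct)
  case base then show ?case by simp
next
  case (step m) then show ?case using LC_Suc[OF I, of m] by blast
qed

lemma LC_eq:
  assumes I: "ideal_in (adjoin A g) I" and J: "ideal_in (adjoin A g) J" and IJ: "I \<subseteq> J"
    and L: "\<And>n. LC n J \<subseteq> LC n I"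
  shows "J \<subseteq> I"
proof -
  have main: "\<forall>as. length as = n \<longrightarrow> set as \<subseteq> A \<longrightarrow> pe g as \<in> J \<longrightarrow> pe g as \<in> I" for n
  proof (induction n)
    case 0
    show ?case using I unfolding ideal_in_def by auto
  next
    case (Suc n)
    show ?case
    proof (intro allI impI)
      fix as :: "'a list" assume l: "length as = Suc n" and s: "set as \<subseteq> A" and inJ: "pe g as \<in> J"
      obtain bs a where asd: "as = bs @ [a]" using l by (metis length_Suc_conv_rev)
      have lb: "length bs = n" using l asd by simp
      have sb: "set bs \<subseteq> A" "a \<in> A" using s asd by auto
      have pe1: "pe g as = a * g ^ n + pe g bs" using asd lb by (simp add: pe_append)
      have "a \<in> LC n J" unfolding LC_def using sb lb inJ pe1 by (intro CollectI conjI exI[of _ bs]) auto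
      then have "a \<in> LC n I" using L by blast
      then obtain cs where cs: "set cs \<subseteq> A" "length cs = n" "a * g ^ n + pe g cs \<in> I" unfolding LC_def by blast
      have cJ: "a * g ^ n + pe g cs \<in> J" using cs(3) IJ by blast
      have "pe g as - (a * g ^ n + pe g cs) \<in> J" by (rule ideal_sub[OF J inJ cJ])
      moreover have "pe g as - (a * g ^ n + pe g cs) = pe g (map2 (-) bs cs)"
        using pe1 pe_diff[of bs cs g] lb cs(2) by simp
      ultimately have dJ: "pe g (map2 (-) bs cs) \<in> J" by simp
      have sd: "set (map2 (-) bs cs) \<subseteq> A"
        using set_map2_sub[OF sb(1) cs(1), of "(-)"] subring_diff[OF A] by blast
      have "pe g (map2 (-) bs cs) \<in> I" using Suc.IH dJ sd lb cs(2) by simp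
      then have "(a * g ^ n + pe g cs) + pe g (map2 (-) bs cs) \<in> I" using cs(3) I unfolding ideal_in_def by blast
      moreover have "(a * g ^ n + pe g cs) + pe g (map2 (-) bs cs) = pe g as"
        using pe1 pe_diff[of bs cs g] lb cs(2) by simp
      ultimately show "pe g as \<in> I" by simp
    qed
  qed
  show ?thesis
  proof
    fix x assume x: "x \<in> J"
    then have "x \<in> adjoin A g" using J unfolding ideal_in_def by blast
    then obtain as where "set as \<subseteq> A" "x = pe g as" unfolding adjoin_def by blast
    then show "x \<in> I" using main x by blast
  qed
qed

lemma hilbert_step:
  assumes NA: "noeth A"
  shows "noeth (adjoin A g)"
  unfolding noeth_def
proof (intro allI impI)
  fix F assume F: "F \<noteq> {} \<and> (\<forall>I\<in>F. ideal_in (adjoin A g) I)"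
  have Fid: "\<And>I. I \<in> F \<Longrightarrow> ideal_in (adjoin A g) I" by (rule bspec[OF conjunct2[OF F]])
  have step: "\<forall>I0\<in>F. \<exists>I1\<in>F. I0 \<subseteq> I1 \<and> (\<forall>I\<in>F. I1 \<subseteq> I \<longrightarrow> (\<forall>n<N. LC n I = LC n I1))" for N
  proof (induction N)
    case 0 show ?case
    proof
      fix I0 assume "I0 \<in> F"
      then show "\<exists>I1\<in>F. I0 \<subseteq> I1 \<and> (\<forall>I\<in>F. I1 \<subseteq> I \<longrightarrow> (\<forall>n<0. LC n I = LC n I1))"
        by (intro bexI[of _ I0]) simp_all
    qed
  next
    case (Suc N)
    show ?case
    proof
      fix I0 assume I0: "I0 \<in> F"
      obtain I1 where I1: "I1 \<in> F" "I0 \<subseteq> I1" "\<forall>I\<in>F. I1 \<subseteq> I \<longrightarrow> (\<forall>n<N. LC n I = LC n I1)"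
        using bspec[OF Suc.IH I0] that by blast
      define G where "G = {LC N I | I. I \<in> F \<and> I1 \<subseteq> I}"
      have inG: "LC N I \<in> G" if "I \<in> F" "I1 \<subseteq> I" for I
        unfolding G_def by (rule CollectI, rule exI[of _ I], simp add: that)
      have Gne: "G \<noteq> {}" using inG[OF I1(1) subset_refl] by (metis empty_iff)
      have Gid: "\<forall>L\<in>G. ideal_in A L"
      proof
        fix L assume "L \<in> G"
        then obtain I where "I \<in> F" "L = LC N I" unfolding G_def by blast
        then show "ideal_in A L" using LC_ideal[OF Fid] by simp
      qed
      obtain M where M: "M \<in> G" "\<forall>L\<in>G. M \<subseteq> L \<longrightarrow> L = M"
        using noethD[OF NA Gne Gid] by (elim bexE) (rule that)
      obtain I2 where I2: "I2 \<in> F" "I1 \<subseteq> I2" "M = LC N I2" using M(1) unfolding G_def by blast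
      have P: "\<forall>n<Suc N. LC n I = LC n I2" if I: "I \<in> F" "I2 \<subseteq> I" for I
      proof (intro allI impI)
        fix n assume n: "n < Suc N"
        have I1I: "I1 \<subseteq> I" using I2(2) I(2) by (rule subset_trans)
        show "LC n I = LC n I2"
        proof (cases "n < N")
          case True
          have "LC n I = LC n I1" using bspec[OF I1(3) I(1)] I1I True by simp
          moreover have "LC n I2 = LC n I1" using bspec[OF I1(3) I2(1)] I2(2) True by simp
          ultimately show ?thesis by simp
        next
          case False
          then have nN: "n = N" using n by simp
          have "M \<subseteq> LC N I" using I2(3) LC_monoI[OF I(2)] by simp
          then have "LC N I = M" using bspec[OF M(2) inG[OF I(1) I1I]] by simp
          then show ?thesis using nN I2(3) by simp
        qed
      qed
      show "\<exists>I1\<in>F. I0 \<subseteq> I1 \<and> (\<forall>I\<in>F. I1 \<subseteq> I \<longrightarrow> (\<forall>n<Suc N. LC n I = LC n I1))"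
        apply (rule bexI[OF _ I2(1)])
        using I1(2) I2(2) P by blast
    qed
  qed
  define H where "H = {LC n I | n I. I \<in> F}"
  obtain Ia where Ia: "Ia \<in> F" using conjunct1[OF F] by (metis ex_in_conv)
  have inH: "LC n I \<in> H" if "I \<in> F" for n I unfolding H_def by (rule CollectI, rule exI[of _ n], rule exI[of _ I], simp add: that)
  have Hne: "H \<noteq> {}" using inH[OF Ia] by (metis empty_iff)
  have Hid: "\<forall>L\<in>H. ideal_in A L"
  proof
    fix L assume "L \<in> H"
    then obtain n I where "I \<in> F" "L = LC n I" unfolding H_def by blast
    then show "ideal_in A L" using LC_ideal Fid by blast
  qed
  obtain M where M: "M \<in> H" "\<forall>L\<in>H. M \<subseteq> L \<longrightarrow> L = M"
    using noethD[OF NA Hne Hid] by blast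
  then obtain n0 I0 where I0: "I0 \<in> F" "M = LC n0 I0" unfolding H_def by blast
  from bspec[OF step[of n0] I0(1)] obtain I1 where I1a: "I1 \<in> F"
    and I1b: "I0 \<subseteq> I1 \<and> (\<forall>I\<in>F. I1 \<subseteq> I \<longrightarrow> (\<forall>n<n0. LC n I = LC n I1))" by (rule bexE)
  note I1 = I1a conjunct1[OF I1b] conjunct2[OF I1b]
  show "\<exists>M\<in>F. \<forall>I\<in>F. M \<subseteq> I \<longrightarrow> I = M"
  proof (intro bexI[OF _ I1(1)] ballI impI)
    fix I assume I: "I \<in> F" "I1 \<subseteq> I"
    have "LC n I \<subseteq> LC n I1" for n
    proof (cases "n < n0")
      case True then show ?thesis using I1(3) I by blast
    next
      case False
      then have le: "n0 \<le> n" by simp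
      have a: "M \<subseteq> LC n I1"
        using I0(2) LC_monoI[OF I1(2), of n0] LC_mono[OF Fid[OF I1(1)] le] by blast
      have "M \<subseteq> LC n I" using a LC_monoI[OF I(2), of n] by blast
      then have "LC n I = M" using M(2) inH[OF I(1)] by blast
      moreover have "LC n I1 = M" using M(2) inH[OF I1(1)] a by blast
      ultimately show ?thesis by simp
    qed
    then have "I \<subseteq> I1" using LC_eq[OF Fid[OF I1(1)] Fid[OF I(1)] I(2)] by blast
    then show "I = I1" using I(2) by blast
  qed
qed

end

lemma noeth_rg: "finite G \<Longrightarrow> noeth (ring_generated G)"
proof (induction G rule: finite_induct)
  case empty
  show ?case unfolding rg_empty by (rule noeth_int)
next
  case (insert g G)
  show ?case unfolding rg_insert by (rule hilbert_step[OF rg_subring insert.IH])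
qed

definition prime_id :: "'a::comm_ring_1 set \<Rightarrow> bool" where
  "prime_id Q \<longleftrightarrow> ideal_in UNIV Q \<and> (\<forall>a b. a * b \<in> Q \<longrightarrow> a \<in> Q \<or> b \<in> Q)"

definition span1 :: "'a::comm_ring_1 set \<Rightarrow> 'a \<Rightarrow> 'a set" where
  "span1 M a = {m + u * a | m u. m \<in> M}"

lemma span1_ideal: assumes M: "ideal_in UNIV M" shows "ideal_in UNIV (span1 M a)"
  unfolding ideal_in_def
proof (intro conjI ballI)
  show "span1 M a \<subseteq> UNIV" by simp
  have "0 + 0 * a \<in> span1 M a" unfolding span1_def using M unfolding ideal_in_def by blast
  then show "0 \<in> span1 M a" by simp
next
  fix x y assume "x \<in> span1 M a" "y \<in> span1 M a"
  then obtain m1 u1 m2 u2 where e: "x = m1 + u1 * a" "y = m2 + u2 * a" "m1 \<in> M" "m2 \<in> M" unfolding span1_def by blast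
  have "m1 + m2 \<in> M" using e(3,4) M unfolding ideal_in_def by blast
  moreover have "x + y = (m1 + m2) + (u1 + u2) * a" using e by (simp add: algebra_simps)
  ultimately show "x + y \<in> span1 M a" unfolding span1_def by blast
next
  fix c x assume "x \<in> span1 M a"
  then obtain m u where e: "x = m + u * a" "m \<in> M" unfolding span1_def by blast
  have "c * m \<in> M" using e(2) M unfolding ideal_in_def by blast
  moreover have "c * x = c * m + (c * u) * a" using e by (simp add: algebra_simps)
  ultimately show "c * x \<in> span1 M a" unfolding span1_def by blast
qed

lemma span1_sup: "ideal_in UNIV M \<Longrightarrow> M \<subseteq> span1 M a"
proof
  fix x assume "x \<in> M"
  then have "x + 0 * a \<in> span1 M a" unfolding span1_def by blast
  then show "x \<in> span1 M a" by simp
qed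

lemma span1_a: "ideal_in UNIV M \<Longrightarrow> a \<in> span1 M a"
proof -
  assume "ideal_in UNIV M"
  then have "0 \<in> M" unfolding ideal_in_def by blast
  then have "0 + 1 * a \<in> span1 M a" unfolding span1_def by blast
  then show ?thesis by simp
qed

definition good :: "'a::comm_ring_1 set \<Rightarrow> bool" where
  "good I \<longleftrightarrow> (\<exists>Qs. finite Qs \<and> (\<forall>Q\<in>Qs. prime_id Q \<and> I \<subseteq> Q) \<and> (\<forall>z. (\<forall>Q\<in>Qs. z \<in> Q) \<longrightarrow> (\<exists>n. z ^ n \<in> I)))"

lemma decomp:
  assumes N: "noeth (UNIV :: 'a::comm_ring_1 set)" and I: "ideal_in UNIV (I :: 'a set)"
  shows "good I"
proof (rule ccontr)
  assume nI: "\<not> good I"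
  define F where "F = {J :: 'a set. ideal_in UNIV J \<and> \<not> good J}"
  have IF: "I \<in> F" unfolding F_def using I nI by blast
  have Fne: "F \<noteq> {}" using IF by (metis empty_iff)
  have Fid: "\<forall>J\<in>F. ideal_in UNIV J" unfolding F_def by blast
  from noethD[OF N Fne Fid] obtain M where M1: "M \<in> F" and M2: "\<forall>J\<in>F. M \<subseteq> J \<longrightarrow> J = M" by (rule bexE)
  have Mid: "ideal_in UNIV M" and Mng: "\<not> good M" using M1 unfolding F_def by blast+
  have gsp: "good (span1 M a)" if "a \<notin> M" for a
  proof (rule ccontr)
    assume "\<not> good (span1 M a)"
    then have "span1 M a \<in> F" unfolding F_def using span1_ideal[OF Mid] by blast
    then have "span1 M a = M" using M2 span1_sup[OF Mid] by blast
    then show False using span1_a[OF Mid, of a] that by simp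
  qed
  show False
  proof (cases "prime_id M")
    case True
    have "good M" unfolding good_def
      apply (rule exI[of _ "{M}"])
      using True by (auto intro!: exI[of _ 1])
    then show False using Mng by simp
  next
    case False
    then obtain a b where ab: "a * b \<in> M" "a \<notin> M" "b \<notin> M" using Mid unfolding prime_id_def by blast
    obtain Qa where Qa: "finite Qa" "\<forall>Q\<in>Qa. prime_id Q \<and> span1 M a \<subseteq> Q"
      "\<forall>z. (\<forall>Q\<in>Qa. z \<in> Q) \<longrightarrow> (\<exists>n. z ^ n \<in> span1 M a)" using gsp[OF ab(2)] unfolding good_def by blast
    obtain Qb where Qb: "finite Qb" "\<forall>Q\<in>Qb. prime_id Q \<and> span1 M b \<subseteq> Q"
      "\<forall>z. (\<forall>Q\<in>Qb. z \<in> Q) \<longrightarrow> (\<exists>n. z ^ n \<in> span1 M b)" using gsp[OF ab(3)] unfolding good_def by blast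
    have "good M" unfolding good_def
    proof (intro exI[of _ "Qa \<union> Qb"] conjI allI impI ballI)
      show "finite (Qa \<union> Qb)" using Qa(1) Qb(1) by simp
    next
      fix Q assume "Q \<in> Qa \<union> Qb"
      then show "prime_id Q" using Qa(2) Qb(2) by blast
    next
      fix Q assume "Q \<in> Qa \<union> Qb"
      then show "M \<subseteq> Q" using Qa(2) Qb(2) span1_sup[OF Mid, of a] span1_sup[OF Mid, of b] by blast
    next
      fix z assume z: "\<forall>Q\<in>Qa \<union> Qb. z \<in> Q"
      obtain n where n: "z ^ n \<in> span1 M a" using Qa(3) z by blast
      obtain k where k: "z ^ k \<in> span1 M b" using Qb(3) z by blast
      obtain m1 u where e1: "z ^ n = m1 + u * a" "m1 \<in> M" using n unfolding span1_def by blast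
      obtain m2 v where e2: "z ^ k = m2 + v * b" "m2 \<in> M" using k unfolding span1_def by blast
      have "z ^ (n + k) = m1 * (m2 + v * b) + (u * a) * m2 + (u * v) * (a * b)"
        by (simp add: power_add e1 e2 algebra_simps)
      moreover have "m1 * (m2 + v * b) \<in> M" using e1(2) Mid unfolding ideal_in_def by (metis UNIV_I mult.commute)
      moreover have "(u * a) * m2 \<in> M" using e2(2) Mid unfolding ideal_in_def by blast
      moreover have "(u * v) * (a * b) \<in> M" using ab(1) Mid unfolding ideal_in_def by blast
      ultimately have "z ^ (n + k) \<in> M" using Mid unfolding ideal_in_def by metis
      then show "\<exists>n. z ^ n \<in> M" by (rule exI)
    qed
    then show False using Mng by simp
  qed
qed

context
  fixes \<alpha> :: "'a::comm_ring_1 \<Rightarrow> int"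
  assumes hom: "is_ring_hom_to_int \<alpha>"
begin

lemma al_add: "\<alpha> (x + y) = \<alpha> x + \<alpha> y" using hom unfolding is_ring_hom_to_int_def by blast
lemma al_mult: "\<alpha> (x * y) = \<alpha> x * \<alpha> y" using hom unfolding is_ring_hom_to_int_def by blast
lemma al_1: "\<alpha> 1 = 1" using hom unfolding is_ring_hom_to_int_def by blast
lemma al_0: "\<alpha> 0 = 0" using al_add[of 0 0] by simp
lemma al_neg: "\<alpha> (- x) = - \<alpha> x" using al_add[of x "-x"] al_0 by simp
lemma al_diff: "\<alpha> (x - y) = \<alpha> x - \<alpha> y" using al_add[of x "-y"] al_neg[of y] by simp
lemma al_nat: "\<alpha> (of_nat n) = int n"
  by (induction n) (simp_all add: al_0 al_add al_1)
lemma al_int: "\<alpha> (of_int n) = n"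
proof -
  have "(of_int n :: 'a) = of_nat (nat n) - of_nat (nat (- n))" by (cases "n \<ge> 0") auto
  then show ?thesis by (simp add: al_diff al_nat)
qed

end

lemma key_x:
  fixes \<alpha> :: "'a::comm_ring_1 \<Rightarrow> int" and r x t :: 'a and S :: "'a set"
  assumes hom: "is_ring_hom_to_int \<alpha>" and reg: "regular_elem \<alpha> r"
    and red: "\<And>u::'a. u * u = 0 \<Longrightarrow> u = 0"
    and tJ: "\<forall>p. \<alpha> p = 0 \<longrightarrow> t * x * p = 0"
    and tmin: "\<And>a. \<forall>p. \<alpha> p = 0 \<longrightarrow> a * x * p = 0 \<Longrightarrow> \<alpha> t dvd \<alpha> a"
    and Sc: "\<And>c. \<bar>c\<bar> \<le> \<bar>\<alpha> r\<bar> \<Longrightarrow> t * of_int c \<in> S"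
    and Sfin: "finite S"
  shows "enat (knutson_index r x) = knutson_subindex S r x"
proof -
  note al = al_add[OF hom] al_mult[OF hom] al_int[OF hom] al_0[OF hom] al_diff[OF hom]
  have ar: "\<alpha> r \<noteq> 0" and regx: "\<And>y. y * r = of_int (\<alpha> y) * r" using reg unfolding regular_elem_def by blast+
  define K where "K u \<longleftrightarrow> (\<forall>p. \<alpha> p = 0 \<longrightarrow> u * p = 0)" for u
  have Kinj: "u = v" if "K u" "K v" "\<alpha> u = \<alpha> v" for u v
  proof -
    define w where "w = u - v"
    have aw: "\<alpha> w = 0" unfolding w_def using that(3) al by simp
    have "u * w = 0" "v * w = 0" using that(1,2) aw unfolding K_def by blast+
    then have "w * w = 0" unfolding w_def by (simp add: algebra_simps)
    then have "w = 0" by (rule red)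
    then show ?thesis unfolding w_def by simp
  qed
  have Kr: "K (of_int n * r)" for n
    unfolding K_def
  proof (intro allI impI)
    fix p assume "\<alpha> p = 0"
    then have "p * r = 0" using regx[of p] by simp
    moreover have "of_int n * r * p = of_int n * (p * r)" by (simp add: algebra_simps)
    ultimately show "of_int n * r * p = 0" by simp
  qed
  have F1: "n = m" if "of_int n * r = of_int m * r" for n m :: int
  proof -
    have "\<alpha> (of_int n * r) = \<alpha> (of_int m * r)" using that by simp
    then have "n * \<alpha> r = m * \<alpha> r" using al by simp
    then show ?thesis using ar by simp
  qed
  have KJ: "K (a * x)" if "\<forall>p. \<alpha> p = 0 \<longrightarrow> a * x * p = 0" for a
    using that unfolding K_def by blast
  define Nx where "Nx = {n::int. \<exists>a. a * x = of_int n * r}"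
  have Nx0: "0 \<in> Nx" unfolding Nx_def by (rule CollectI, rule exI[of _ 0]) simp
  have Nxadd: "n1 + n2 \<in> Nx" if h: "n1 \<in> Nx" "n2 \<in> Nx" for n1 n2
  proof -
    obtain a1 a2 where e: "a1 * x = of_int n1 * r" "a2 * x = of_int n2 * r" using h unfolding Nx_def by blast
    have "(a1 + a2) * x = a1 * x + a2 * x" by (rule distrib_right)
    also have "\<dots> = of_int (n1 + n2) * r" unfolding e by (simp add: distrib_right)
    finally have "(a1 + a2) * x = of_int (n1 + n2) * r" .
    then show ?thesis unfolding Nx_def by blast
  qed
  have Nxmul: "z * n \<in> Nx" if h: "n \<in> Nx" for z n
  proof -
    obtain a where e: "a * x = of_int n * r" using h unfolding Nx_def by blast
    have "(of_int z * a) * x = of_int z * (a * x)" by (rule mult.assoc)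
    also have "\<dots> = of_int (z * n) * r" unfolding e by (simp add: mult.assoc)
    finally have "(of_int z * a) * x = of_int (z * n) * r" .
    then show ?thesis unfolding Nx_def by blast
  qed
  obtain m0 where m0: "m0 \<in> Nx" "\<forall>n\<in>Nx. m0 dvd n"
    using int_gen[of Nx] Nx0 Nxadd Nxmul by blast
  obtain a where a: "a * x = of_int m0 * r" using m0(1) unfolding Nx_def by blast
  have aJ: "\<forall>p. \<alpha> p = 0 \<longrightarrow> a * x * p = 0"
    using Kr[of m0] unfolding a K_def by blast
  obtain k where k: "\<alpha> a = \<alpha> t * k" using tmin[OF aJ] by (auto simp: dvd_def)
  have tkJ: "K (t * of_int c * x)" for c
    unfolding K_def
  proof (intro allI impI)
    fix p assume "\<alpha> p = 0"
    then have "t * x * p = 0" using tJ by blast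
    moreover have "t * of_int c * x * p = of_int c * (t * x * p)" by (simp add: mult_ac)
    ultimately show "t * of_int c * x * p = 0" by simp
  qed
  have tk: "t * of_int k * x = of_int m0 * r"
  proof (rule Kinj[OF tkJ Kr])
    show "\<alpha> (t * of_int k * x) = \<alpha> (of_int m0 * r)"
      using arg_cong[OF a, of \<alpha>] k al by (simp add: algebra_simps)
  qed
  define C where "C = {c::int. \<exists>n. t * of_int c * x = of_int n * r}"
  have C0: "0 \<in> C" unfolding C_def by (rule CollectI, rule exI[of _ 0]) simp
  have Cadd: "c1 + c2 \<in> C" if h: "c1 \<in> C" "c2 \<in> C" for c1 c2
  proof -
    obtain n1 n2 where e: "t * of_int c1 * x = of_int n1 * r" "t * of_int c2 * x = of_int n2 * r" using h unfolding C_def by blast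
    have "t * of_int (c1 + c2) * x = t * of_int c1 * x + t * of_int c2 * x" by (simp add: distrib_left distrib_right)
    also have "\<dots> = of_int (n1 + n2) * r" unfolding e by (simp add: distrib_right)
    finally have "t * of_int (c1 + c2) * x = of_int (n1 + n2) * r" .
    then show ?thesis unfolding C_def by blast
  qed
  have Cmul: "z * c \<in> C" if h: "c \<in> C" for z c
  proof -
    obtain n where e: "t * of_int c * x = of_int n * r" using h unfolding C_def by blast
    have "t * of_int (z * c) * x = of_int z * (t * of_int c * x)" by (simp add: mult_ac)
    also have "\<dots> = of_int (z * n) * r" unfolding e by (simp add: mult.assoc)
    finally have "t * of_int (z * c) * x = of_int (z * n) * r" .
    then show ?thesis unfolding C_def by blast
  qed
  obtain c0 where c0: "c0 \<in> C" "\<forall>c\<in>C. c0 dvd c"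
    using int_gen[of C] C0 Cadd Cmul by blast
  have arC: "\<alpha> r \<in> C"
  proof -
    have "t * of_int (\<alpha> r) * x = of_int (\<alpha> (t * x)) * r"
    proof (rule Kinj[OF tkJ Kr])
      show "\<alpha> (t * of_int (\<alpha> r) * x) = \<alpha> (of_int (\<alpha> (t * x)) * r)"
        using al by (simp add: algebra_simps)
    qed
    then show ?thesis unfolding C_def by blast
  qed
  have kC: "k \<in> C" unfolding C_def using tk by blast
  obtain n0 where n0: "t * of_int c0 * x = of_int n0 * r" using c0(1) unfolding C_def by blast
  have c0r: "\<bar>c0\<bar> \<le> \<bar>\<alpha> r\<bar>" using c0(2) arC ar by (simp add: dvd_imp_le_int)
  obtain e where e: "k = c0 * e" using c0(2) kC by (auto simp: dvd_def)
  have "of_int m0 * r = of_int e * (t * of_int c0 * x)" using tk e by (simp add: algebra_simps)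
  also have "\<dots> = of_int (e * n0) * r" using n0 by (simp add: algebra_simps)
  finally have m0e: "m0 = e * n0" by (rule F1)
  have n0N: "n0 \<in> Nx" unfolding Nx_def using n0 by blast
  have d1: "m0 dvd n0" using m0(2) n0N by blast
  have d2: "n0 dvd m0" using m0e by simp
  have absn: "\<bar>n0\<bar> = \<bar>m0\<bar>" using zdvd_antisym_abs[OF d1 d2] by simp
  define s where "s = t * of_int c0"
  have sS: "s \<in> S" unfolding s_def by (rule Sc[OF c0r])
  have sx: "s * x = of_int n0 * r" unfolding s_def using n0 by simp
  have idx: "knutson_index r x = nat \<bar>m0\<bar>"
  proof -
    have eq: "{b * x | b. True} \<inter> int_multiples r = int_multiples (of_nat (nat \<bar>m0\<bar>) * r)"
    proof
      show "{b * x | b. True} \<inter> int_multiples r \<subseteq> int_multiples (of_nat (nat \<bar>m0\<bar>) * r)"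
      proof
        fix y assume "y \<in> {b * x | b. True} \<inter> int_multiples r"
        then obtain b n where y: "y = b * x" "y = of_int n * r" unfolding int_multiples_def by blast
        then have "n \<in> Nx" unfolding Nx_def by blast
        then have "\<bar>m0\<bar> dvd n" using m0(2) by simp
        then obtain f where f: "n = \<bar>m0\<bar> * f" by (auto simp: dvd_def)
        have "(of_nat (nat \<bar>m0\<bar>) :: 'a) = of_int \<bar>m0\<bar>" by simp
        then have "y = of_int f * (of_nat (nat \<bar>m0\<bar>) * r)" using y(2) f by (simp add: algebra_simps)
        then show "y \<in> int_multiples (of_nat (nat \<bar>m0\<bar>) * r)" unfolding int_multiples_def by blast
      qed
      show "int_multiples (of_nat (nat \<bar>m0\<bar>) * r) \<subseteq> {b * x | b. True} \<inter> int_multiples r"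
      proof
        fix y assume "y \<in> int_multiples (of_nat (nat \<bar>m0\<bar>) * r)"
        then obtain f where f: "y = of_int f * (of_nat (nat \<bar>m0\<bar>) * r)" unfolding int_multiples_def by blast
        have "(of_nat (nat \<bar>m0\<bar>) :: 'a) = of_int \<bar>m0\<bar>" by simp
        then have y2: "y = of_int (f * \<bar>m0\<bar>) * r" using f by (simp add: algebra_simps)
        have "\<bar>m0\<bar> \<in> Nx" using m0(1) Nxmul[of m0 "sgn m0"] by (simp add: abs_sgn mult.commute)
        then have "f * \<bar>m0\<bar> \<in> Nx" by (rule Nxmul)
        then obtain b where bx: "b * x = of_int (f * \<bar>m0\<bar>) * r" unfolding Nx_def by blast
        have "y \<in> {b * x | b. True}" using y2 bx by (intro CollectI exI[of _ b]) simp
        moreover have "y \<in> int_multiples r" unfolding int_multiples_def using y2 by blast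
        ultimately show "y \<in> {b * x | b. True} \<inter> int_multiples r" by (rule IntI)
      qed
    qed
    show ?thesis unfolding knutson_index_def
    proof (rule the_equality)
      show "{b * x | b. True} \<inter> int_multiples r = int_multiples (of_nat (nat \<bar>m0\<bar>) * r)" by (rule eq)
    next
      fix m' assume m': "{b * x | b. True} \<inter> int_multiples r = int_multiples (of_nat m' * r)"
      have mem: "of_nat u * r \<in> int_multiples (of_nat u * r)" for u :: nat
        unfolding int_multiples_def by (rule CollectI, rule exI[of _ 1]) simp
      have A1: "of_nat m' * r \<in> int_multiples (of_nat (nat \<bar>m0\<bar>) * r)" using mem[of m'] m' eq by simp
      have A2: "of_nat (nat \<bar>m0\<bar>) * r \<in> int_multiples (of_nat m' * r)" using mem[of "nat \<bar>m0\<bar>"] m' eq by simp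
      obtain f1 where f1: "of_nat m' * r = of_int f1 * (of_nat (nat \<bar>m0\<bar>) * r)" using A1 unfolding int_multiples_def by blast
      obtain f2 where f2: "of_nat (nat \<bar>m0\<bar>) * r = of_int f2 * (of_nat m' * r)" using A2 unfolding int_multiples_def by blast
      have "of_int (int m') * r = of_int (f1 * int (nat \<bar>m0\<bar>)) * r" using f1 by (simp add: algebra_simps)
      then have g1: "int m' = f1 * int (nat \<bar>m0\<bar>)" by (rule F1)
      have "of_int (int (nat \<bar>m0\<bar>)) * r = of_int (f2 * int m') * r" using f2 by (simp add: algebra_simps)
      then have g2: "int (nat \<bar>m0\<bar>) = f2 * int m'" by (rule F1)
      have "int (nat \<bar>m0\<bar>) dvd int m'" using g1 by simp
      moreover have "int m' dvd int (nat \<bar>m0\<bar>)" using g2 by simp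
      ultimately have "int m' = int (nat \<bar>m0\<bar>)" by (simp add: zdvd_antisym_nonneg)
      then show "m' = nat \<bar>m0\<bar>" by simp
    qed
  qed
  have sp: "s \<in> S_part S r x" unfolding S_part_def int_multiples_def using sS sx by blast
  then have spne: "S_part S r x \<noteq> {}" by blast
  have n0I: "n0 \<in> Ind S r x" unfolding Ind_def using sp sx by blast
  have IndN: "\<forall>n\<in>Ind S r x. m0 dvd n"
  proof
    fix n assume "n \<in> Ind S r x"
    then obtain s' where "s' * x = of_int n * r" unfolding Ind_def by blast
    then have "n \<in> Nx" unfolding Nx_def by blast
    then show "m0 dvd n" using m0(2) by blast
  qed
  have G1: "Gcd (Ind S r x) dvd n0" using n0I by (rule Gcd_dvd)
  have G2: "m0 dvd Gcd (Ind S r x)" using IndN by (simp add: dvd_Gcd_iff)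
  have Gnn: "Gcd (Ind S r x) \<ge> 0" by simp
  have "Gcd (Ind S r x) dvd \<bar>m0\<bar>" using G1 absn by (metis dvd_abs_iff)
  moreover have "\<bar>m0\<bar> dvd Gcd (Ind S r x)" using G2 by simp
  ultimately have "Gcd (Ind S r x) = \<bar>m0\<bar>" using Gnn by (simp add: zdvd_antisym_nonneg)
  then show ?thesis unfolding knutson_subindex_def using spne idx by simp
qed

theorem proposition2p6:
  fixes \<alpha> :: "'a::comm_ring_1 \<Rightarrow> int" and r :: 'a
  assumes "finitely_generated_ring TYPE('a)"
    and "reduced_ring TYPE('a)"
    and "is_ring_hom_to_int \<alpha>"
    and "regular_elem \<alpha> r"
  shows "\<exists>S::'a set. finite S \<and>
           (\<forall>x. enat (knutson_index r x) = knutson_subindex S r x)"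
proof -
  note hom = assms(3)
  obtain G :: "'a set" where G: "finite G" "ring_generated G = UNIV"
    using assms(1) unfolding finitely_generated_ring_def by blast
  have N: "noeth (UNIV :: 'a set)" using noeth_rg[OF G(1)] G(2) by simp
  have I0: "ideal_in UNIV {0::'a}" unfolding ideal_in_def by simp
  obtain Qs :: "'a set set" where Qs: "finite Qs" "\<forall>Q\<in>Qs. prime_id Q \<and> {0} \<subseteq> Q"
    "\<forall>z. (\<forall>Q\<in>Qs. z \<in> Q) \<longrightarrow> (\<exists>n. z ^ n \<in> {0})"
    using decomp[OF N I0] unfolding good_def by blast
  have redu: "\<And>(x::'a) (n::nat). x ^ n = 0 \<Longrightarrow> x = 0" using assms(2) unfolding reduced_ring_def by blast
  have red: "u = 0" if "u * u = 0" for u :: 'a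
    using redu[of u 2] that by (simp add: power2_eq_square)
  have Z: "z = 0" if h: "\<forall>Q\<in>Qs. z \<in> Q" for z :: 'a
  proof -
    obtain n where "z ^ n \<in> {0}" using Qs(3) h by blast
    then show ?thesis using redu by blast
  qed
  have Qp: "prime_id Q" if "Q \<in> Qs" for Q using Qs(2) that by blast
  have Q0: "0 \<in> Q" if "Q \<in> Qs" for Q using Qp[OF that] unfolding prime_id_def ideal_in_def by blast
  have Qadd: "a + b \<in> Q" if "Q \<in> Qs" "a \<in> Q" "b \<in> Q" for Q a b
    using Qp[OF that(1)] that(2,3) unfolding prime_id_def ideal_in_def by blast
  have Qmul: "c * a \<in> Q" if "Q \<in> Qs" "a \<in> Q" for Q a c
    using Qp[OF that(1)] that(2) unfolding prime_id_def ideal_in_def by blast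
  have Qpr: "a \<in> Q \<or> b \<in> Q" if "Q \<in> Qs" "a * b \<in> Q" for Q a b
    using Qp[OF that(1)] that(2) unfolding prime_id_def by blast
  define Jx where "Jx x = {a. \<forall>p. \<alpha> p = 0 \<longrightarrow> a * x * p = 0}" for x
  define Fam where "Fam = Inter ` Pow Qs"
  have finFam: "finite Fam" unfolding Fam_def using Qs(1) by simp
  have JF: "Jx x \<in> Fam" for x
  proof -
    define B where "B = {Q \<in> Qs. \<exists>p. \<alpha> p = 0 \<and> x * p \<notin> Q}"
    have "Jx x = \<Inter>B"
    proof
      show "Jx x \<subseteq> \<Inter>B"
      proof
        fix a assume a: "a \<in> Jx x"
        show "a \<in> \<Inter>B"
        proof
          fix Q assume "Q \<in> B"
          then obtain p where Q: "Q \<in> Qs" "\<alpha> p = 0" "x * p \<notin> Q" unfolding B_def by blast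
          have "a * (x * p) = 0" using a Q(2) unfolding Jx_def by (simp add: mult.assoc)
          then have "a * (x * p) \<in> Q" using Q0[OF Q(1)] by simp
          then show "a \<in> Q" using Qpr[OF Q(1)] Q(3) by blast
        qed
      qed
      show "\<Inter>B \<subseteq> Jx x"
      proof
        fix a assume a: "a \<in> \<Inter>B"
        show "a \<in> Jx x" unfolding Jx_def
        proof (rule CollectI, intro allI impI)
          fix p assume p: "\<alpha> p = 0"
          have "a * x * p \<in> Q" if Q: "Q \<in> Qs" for Q
          proof (cases "\<exists>p'. \<alpha> p' = 0 \<and> x * p' \<notin> Q")
            case True
            then have "Q \<in> B" unfolding B_def using Q by blast
            then have "a \<in> Q" using a by blast
            then have "(x * p) * a \<in> Q" by (rule Qmul[OF Q])
            then show ?thesis by (simp add: mult_ac)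
          next
            case False
            then have "x * p \<in> Q" using p by blast
            then have "a * (x * p) \<in> Q" by (rule Qmul[OF Q])
            then show ?thesis by (simp add: mult_ac)
          qed
          then show "a * x * p = 0" using Z by blast
        qed
      qed
    qed
    moreover have "B \<in> Pow Qs" unfolding B_def by blast
    ultimately show ?thesis unfolding Fam_def by blast
  qed
  have tex: "\<exists>t. t \<in> J \<and> (\<forall>a\<in>J. \<alpha> t dvd \<alpha> a)" if J: "J \<in> Fam" for J
  proof -
    obtain B where B: "B \<subseteq> Qs" "J = \<Inter>B" using J unfolding Fam_def by blast
    have J0: "0 \<in> J" using B Q0 by blast
    have Jadd: "a + b \<in> J" if "a \<in> J" "b \<in> J" for a b using B Qadd that by blast
    have Jmul: "c * a \<in> J" if "a \<in> J" for a c using B Qmul that by blast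
    have A0: "0 \<in> \<alpha> ` J" using J0 al_0[OF hom] by (metis image_eqI)
    have Aadd: "u + v \<in> \<alpha> ` J" if h: "u \<in> \<alpha> ` J" "v \<in> \<alpha> ` J" for u v
    proof -
      obtain a b where "a \<in> J" "b \<in> J" "u = \<alpha> a" "v = \<alpha> b" using h by blast
      then show ?thesis using Jadd al_add[OF hom, of a b] by (metis image_eqI)
    qed
    have Amul: "z * u \<in> \<alpha> ` J" if h: "u \<in> \<alpha> ` J" for z u
    proof -
      obtain a where "a \<in> J" "u = \<alpha> a" using h by blast
      then show ?thesis using Jmul[of a "of_int z"] al_mult[OF hom, of "of_int z" a] al_int[OF hom, of z]
        by (metis image_eqI)
    qed
    obtain g where g: "g \<in> \<alpha> ` J" "\<forall>n\<in>\<alpha> ` J. g dvd n" using int_gen[of "\<alpha> ` J"] A0 Aadd Amul by blast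
    then obtain t where "t \<in> J" "g = \<alpha> t" by blast
    then show ?thesis using g(2) by blast
  qed
  define tf where "tf J = (SOME t. t \<in> J \<and> (\<forall>a\<in>J. \<alpha> t dvd \<alpha> a))" for J
  have tf: "tf J \<in> J" "\<forall>a\<in>J. \<alpha> (tf J) dvd \<alpha> a" if "J \<in> Fam" for J
    using someI_ex[OF tex[OF that]] unfolding tf_def by blast+
  define S where "S = (\<lambda>(J, c). tf J * of_int c) ` (Fam \<times> {- \<bar>\<alpha> r\<bar>..\<bar>\<alpha> r\<bar>})"
  have finS: "finite S" unfolding S_def using finFam by simp
  show ?thesis
  proof (intro exI[of _ S] conjI allI)
    show "finite S" by (rule finS)
  next
    fix x
    show "enat (knutson_index r x) = knutson_subindex S r x"
    proof (rule key_x[OF hom assms(4) red])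
      show "\<forall>p. \<alpha> p = 0 \<longrightarrow> tf (Jx x) * x * p = 0" using tf(1)[OF JF[of x]] unfolding Jx_def by blast
      show "\<alpha> (tf (Jx x)) dvd \<alpha> a" if "\<forall>p. \<alpha> p = 0 \<longrightarrow> a * x * p = 0" for a
      proof -
        have "a \<in> Jx x" unfolding Jx_def using that by blast
        then show ?thesis using tf(2)[OF JF[of x]] by blast
      qed
      show "tf (Jx x) * of_int c \<in> S" if "\<bar>c\<bar> \<le> \<bar>\<alpha> r\<bar>" for c
      proof -
        have "(Jx x, c) \<in> Fam \<times> {- \<bar>\<alpha> r\<bar>..\<bar>\<alpha> r\<bar>}" using JF[of x] that by auto
        then show ?thesis unfolding S_def by (rule rev_image_eqI) simp
      qed
      show "finite S" by (rule finS)
    qed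
  qed
qed

end
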